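(* Let $G:\mathcal P(\mathbb T^d)\to\mathbb R$ and define $\hat G:M\to\mathbb R$ by $\hat G(\psi)=G(\pi_\sharp\psi_\sharp\mathcal L^d)$. Suppose $G$ is strongly differentiable at $\tilde\mu\in\mathcal P(\mathbb T^d)$, let $\mu\in\mathcal P_2(\mathbb R^d)$ satisfy $\pi_\sharp\mu=\tilde\mu$, and let $\psi\in M$ satisfy $\psi_\sharp\mathcal L^d=\mu$. Then $\hat G$ is (Fréchet) differentiable at $\psi\circ h+z$ for every $(h,z)\in H\times L^2_{\mathbb Z}$, and $$D\hat G(\psi\circ h+z)=D\hat G(\psi)\circ h.$$
   Context: $\mathbb T^d=\mathbb R^d/\mathbb Z^d$, $\pi:\mathbb R^d\to\mathbb T^d$ the projection. $M=L^2([0,1)^d,\mathbb R^d)$, $\mathcal L^d$ Lebesgue measure on $[0,1)^d$; $D$ is the gradient on $M$ (an element of $M$ via the $L^2$ inner product). $H$ is the group of bi-measurable bijections of $[0,1)^d$ preserving $\mathcal L^d$; $L^2_{\mathbb Z}=L^2([0,1)^d,\mathbb Z^d)$. $\mathcal P(\mathbb T^d)$: Borel probability measures on $\mathbb T^d$; $\mathcal P_2(\mathbb R^d)$: those on $\mathbb R^d$ with finite second moment. Let $\alpha(x,v)=x+v$. For $\tilde\mu,\tilde\nu\in\mathcal P(\mathbb T^d)$, $\Psi(\tilde\mu,\tilde\nu)$ is the set of probability measures $\gamma$ on $\mathbb T^d\times\mathbb R^d$ with finite second moment in $v$, first marginal $\tilde\mu$ and $\alpha_\sharp\gamma=\tilde\nu$.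 $G$ is strongly differentiable at $\tilde\mu$ if there are $\xi\in L^2_{\tilde\mu}(\mathbb T^d,\mathbb R^d)$ and $k>0$ with $\big|G(\tilde\nu)-G(\tilde\mu)-\int\langle\xi(x),v\rangle d\gamma(x,v)\big|\le k\int|v|^2d\gamma(x,v)$ for all $\tilde\nu$ and all $\gamma\in\Psi(\tilde\mu,\tilde\nu)$. *)

theory Defs
  imports "HOL-Probability.Probability"
begin

definition unit_cube :: "(real ^ 'd) set" where
  "unit_cube = {x. \<forall>i. 0 \<le> x $ i \<and> x $ i < 1}"

definition Leb_cube :: "(real ^ 'd) measure" where
  "Leb_cube = lebesgue_on unit_cube"

text \<open>Projection pi : R^d -> T^d, the torus being modelled by its fundamental domain [0,1)^d.\<close>
definition tor_proj :: "real ^ 'd \<Rightarrow> real ^ 'd" where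
  "tor_proj x = (\<chi> i. frac (x $ i))"

text \<open>P(T^d): Borel probability measures on R^d concentrated on [0,1)^d (i.e. on the torus).\<close>
definition prob_torus :: "(real ^ 'd) measure set" where
  "prob_torus = {m. prob_space m \<and> sets m = sets borel \<and> emeasure m (UNIV - unit_cube) = 0}"

definition prob2 :: "(real ^ 'd) measure set" where
  "prob2 = {m. prob_space m \<and> sets m = sets borel \<and> integrable m (\<lambda>x. (norm x)\<^sup>2)}"

text \<open>M = L^2([0,1)^d, R^d) (represented by functions).\<close>
definition L2M :: "(real ^ 'd \<Rightarrow> real ^ 'd) set" where
  "L2M = {f. f \<in> borel_measurable Leb_cube \<and> integrable Leb_cube (\<lambda>x. (norm (f x))\<^sup>2)}"

definition L2_inner :: "(real ^ 'd \<Rightarrow> real ^ 'd) \<Rightarrow> (real ^ 'd \<Rightarrow> real ^ 'd) \<Rightarrow> real" where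
  "L2_inner f g = (\<integral>x. f x \<bullet> g x \<partial>Leb_cube)"

definition L2_norm :: "(real ^ 'd \<Rightarrow> real ^ 'd) \<Rightarrow> real" where
  "L2_norm f = sqrt (\<integral>x. (norm (f x))\<^sup>2 \<partial>Leb_cube)"

definition L2Z :: "(real ^ 'd \<Rightarrow> real ^ 'd) set" where
  "L2Z = {z. z \<in> L2M \<and> (\<forall>x\<in>unit_cube. \<forall>i. z x $ i \<in> \<int>)}"

definition meas_pres_bij :: "(real ^ 'd \<Rightarrow> real ^ 'd) set" where
  "meas_pres_bij = {h. bij_betw h unit_cube unit_cube
      \<and> h \<in> measurable Leb_cube Leb_cube
      \<and> inv_into unit_cube h \<in> measurable Leb_cube Leb_cube
      \<and> distr Leb_cube Leb_cube h = Leb_cube}"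

definition Ghat :: "((real ^ 'd) measure \<Rightarrow> real) \<Rightarrow> (real ^ 'd \<Rightarrow> real ^ 'd) \<Rightarrow> real" where
  "Ghat G \<psi> = G (distr (distr Leb_cube borel \<psi>) borel tor_proj)"

definition plans :: "(real ^ 'd) measure \<Rightarrow> (real ^ 'd) measure \<Rightarrow> ((real ^ 'd) \<times> (real ^ 'd)) measure set" where
  "plans mu nu = {\<gamma>. prob_space \<gamma> \<and> sets \<gamma> = sets (borel \<Otimes>\<^sub>M borel)
      \<and> integrable \<gamma> (\<lambda>(x, v). (norm v)\<^sup>2)
      \<and> distr \<gamma> borel fst = mu
      \<and> distr \<gamma> borel (\<lambda>(x, v). tor_proj (x + v)) = nu}"

definition strongly_diff :: "((real ^ 'd) measure \<Rightarrow> real) \<Rightarrow> (real ^ 'd) measure \<Rightarrow> bool" where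
  "strongly_diff G mu \<longleftrightarrow> (\<exists>\<xi> k. \<xi> \<in> borel_measurable mu \<and> integrable mu (\<lambda>x. (norm (\<xi> x))\<^sup>2)
      \<and> k > 0 \<and> (\<forall>nu \<in> prob_torus. \<forall>\<gamma> \<in> plans mu nu.
          \<bar>G nu - G mu - (\<integral>(x, v). \<xi> x \<bullet> v \<partial>\<gamma>)\<bar> \<le> k * (\<integral>(x, v). (norm v)\<^sup>2 \<partial>\<gamma>)))"

definition has_L2_gradient :: "((real ^ 'd \<Rightarrow> real ^ 'd) \<Rightarrow> real) \<Rightarrow> (real ^ 'd \<Rightarrow> real ^ 'd) \<Rightarrow> (real ^ 'd \<Rightarrow> real ^ 'd) \<Rightarrow> bool" where
  "has_L2_gradient F \<psi> \<Phi> \<longleftrightarrow> \<Phi> \<in> L2M \<and>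
     (\<forall>\<epsilon>>0. \<exists>\<delta>>0. \<forall>\<phi>\<in>L2M. L2_norm \<phi> < \<delta> \<longrightarrow>
        \<bar>F (\<lambda>x. \<psi> x + \<phi> x) - F \<psi> - L2_inner \<Phi> \<phi>\<bar> \<le> \<epsilon> * L2_norm \<phi>)"

end

theory Submission
  imports Defs
begin


lemma tor_proj_meas[measurable]: "tor_proj \<in> borel_measurable borel"
proof -
  have "(\<lambda>x. tor_proj x \<bullet> i) \<in> borel_measurable borel" if hi: "i \<in> Basis" for i :: "real^'d"
  proof -
    obtain j where j: "i = axis j 1" using axis_inverse[OF hi] by auto
    have "(\<lambda>x::real^'d. frac (x $ j)) \<in> borel_measurable borel"
      unfolding frac_def by measurable
    then show ?thesis using j by (simp add: tor_proj_def cart_eq_inner_axis[symmetric] inner_axis)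
  qed
  then show ?thesis by (subst borel_measurable_euclidean_space) auto
qed

lemma space_Leb: "space Leb_cube = unit_cube" by (simp add: Leb_cube_def)

lemma tor_proj_in: "tor_proj x \<in> unit_cube"
  by (simp add: tor_proj_def unit_cube_def frac_lt_1)

lemma tor_proj_tor: "tor_proj (tor_proj x + y) = tor_proj (x + y)"
proof -
  have "frac (frac a + b) = frac (a + b)" for a b :: real
  proof -
    have "frac a + b = (a + b) + of_int (- floor a)" by (simp add: frac_def)
    then show ?thesis by (metis frac_add_of_int_right)
  qed
  then show ?thesis by (simp add: tor_proj_def)
qed

lemma tor_proj_int: "(\<forall>i. w $ i \<in> \<int>) \<Longrightarrow> tor_proj (y + w) = tor_proj y"
  by (simp add: tor_proj_def frac_add_int_right)

lemma Ghat_cong: "(\<And>x. x \<in> unit_cube \<Longrightarrow> F x = F' x) \<Longrightarrow> Ghat G F = Ghat G F'"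
  unfolding Ghat_def by (rule arg_cong[where f=G], rule arg_cong2[where f="\<lambda>a b. distr a borel b"],
     rule distr_cong) (auto simp: space_Leb)

lemma Ghat_eq: "F \<in> borel_measurable Leb_cube \<Longrightarrow>
   Ghat G F = G (distr Leb_cube borel (\<lambda>x. tor_proj (F x)))"
  unfolding Ghat_def by (subst distr_distr) (auto simp: comp_def)

lemma mpb_facts:
  assumes "h \<in> meas_pres_bij"
  defines "g \<equiv> inv_into unit_cube h"
  shows "h \<in> measurable Leb_cube Leb_cube" "g \<in> measurable Leb_cube Leb_cube"
    "distr Leb_cube Leb_cube h = Leb_cube" "distr Leb_cube Leb_cube g = Leb_cube"
    "\<And>x. x \<in> unit_cube \<Longrightarrow> g (h x) = x" "\<And>x. x \<in> unit_cube \<Longrightarrow> h (g x) = x"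
proof -
  have b: "bij_betw h unit_cube unit_cube" and hm: "h \<in> measurable Leb_cube Leb_cube"
    and gm: "g \<in> measurable Leb_cube Leb_cube" and d: "distr Leb_cube Leb_cube h = Leb_cube"
    using assms by (auto simp: meas_pres_bij_def)
  show "h \<in> measurable Leb_cube Leb_cube" "g \<in> measurable Leb_cube Leb_cube"
    "distr Leb_cube Leb_cube h = Leb_cube" by fact+
  show gh: "\<And>x. x \<in> unit_cube \<Longrightarrow> g (h x) = x"
    using b unfolding g_def by (simp add: bij_betw_def inv_into_f_f)
  show "\<And>x. x \<in> unit_cube \<Longrightarrow> h (g x) = x"
    using b unfolding g_def by (simp add: bij_betw_def f_inv_into_f)
  have "distr Leb_cube Leb_cube g = distr (distr Leb_cube Leb_cube h) Leb_cube g" by (simp add: d)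
  also have "\<dots> = distr Leb_cube Leb_cube (g \<circ> h)" using gm hm by (simp add: distr_distr)
  also have "\<dots> = distr Leb_cube Leb_cube (\<lambda>x. x)"
    by (rule distr_cong) (auto simp: space_Leb gh)
  also have "\<dots> = Leb_cube" by (simp add: distr_id)
  finally show "distr Leb_cube Leb_cube g = Leb_cube" .
qed

lemma mp_distr:
  assumes "h \<in> measurable Leb_cube Leb_cube" "distr Leb_cube Leb_cube h = Leb_cube"
    and "f \<in> measurable Leb_cube N"
  shows "distr Leb_cube N (\<lambda>x. f (h x)) = distr Leb_cube N f"
proof -
  have "distr Leb_cube N (\<lambda>x. f (h x)) = distr Leb_cube N (f \<circ> h)" by (simp add: comp_def)
  also have "\<dots> = distr (distr Leb_cube Leb_cube h) N f"
    by (rule distr_distr[OF assms(3) assms(1), symmetric])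
  finally have "distr Leb_cube N (\<lambda>x. f (h x)) = distr (distr Leb_cube Leb_cube h) N f" .
  then show ?thesis using assms by simp
qed

lemma mp_integral:
  fixes f :: "real^'d \<Rightarrow> real"
  assumes "h \<in> measurable Leb_cube Leb_cube" "distr Leb_cube Leb_cube h = Leb_cube"
    and "f \<in> borel_measurable Leb_cube"
  shows "(\<integral>x. f (h x) \<partial>Leb_cube) = (\<integral>x. f x \<partial>Leb_cube)"
    and "integrable Leb_cube (\<lambda>x. f (h x)) = integrable Leb_cube f"
proof -
  show "(\<integral>x. f (h x) \<partial>Leb_cube) = (\<integral>x. f x \<partial>Leb_cube)"
    using integral_distr[OF assms(1,3)] assms(2) by simp
  show "integrable Leb_cube (\<lambda>x. f (h x)) = integrable Leb_cube f"
    using integrable_distr_eq[OF assms(1,3)] assms(2) by simp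
qed

lemma L2M_comp:
  assumes "h \<in> measurable Leb_cube Leb_cube" "distr Leb_cube Leb_cube h = Leb_cube"
    and "f \<in> L2M"
  shows "(\<lambda>x. f (h x)) \<in> L2M" "L2_norm (\<lambda>x. f (h x)) = L2_norm f"
proof -
  have fm: "f \<in> borel_measurable Leb_cube" and fi: "integrable Leb_cube (\<lambda>x. (norm (f x))\<^sup>2)"
    using assms(3) by (auto simp: L2M_def)
  have m2: "(\<lambda>x. (norm (f x))\<^sup>2) \<in> borel_measurable Leb_cube" using fm by measurable
  show "(\<lambda>x. f (h x)) \<in> L2M"
    unfolding L2M_def using measurable_compose[OF assms(1) fm]
      mp_integral(2)[OF assms(1,2) m2] fi by simp
  show "L2_norm (\<lambda>x. f (h x)) = L2_norm f"
    unfolding L2_norm_def using mp_integral(1)[OF assms(1,2) m2] by simp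
qed

lemma Ghat_inv:
  assumes "h \<in> meas_pres_bij" "z \<in> L2Z" "f \<in> borel_measurable Leb_cube"
  shows "Ghat G (\<lambda>x. f (h x) + z x) = Ghat G f"
proof -
  note hm = mpb_facts(1,3)[OF assms(1)]
  have zm: "z \<in> borel_measurable Leb_cube" and zi: "\<And>x i. x \<in> unit_cube \<Longrightarrow> z x $ i \<in> \<int>"
    using assms(2) by (auto simp: L2Z_def L2M_def)
  have fhm: "(\<lambda>x. f (h x)) \<in> borel_measurable Leb_cube" using measurable_compose[OF hm(1) assms(3)] .
  have "Ghat G (\<lambda>x. f (h x) + z x) = G (distr Leb_cube borel (\<lambda>x. tor_proj (f (h x) + z x)))"
    by (rule Ghat_eq) (use fhm zm in measurable)
  also have "distr Leb_cube borel (\<lambda>x. tor_proj (f (h x) + z x)) = distr Leb_cube borel (\<lambda>x. tor_proj (f (h x)))"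
    by (rule distr_cong) (auto simp: space_Leb zi tor_proj_int)
  also have "\<dots> = distr Leb_cube borel (\<lambda>x. tor_proj (f x))"
    by (rule mp_distr[OF hm, where f="\<lambda>x. tor_proj (f x)"]) (use assms(3) in measurable)
  also have "G \<dots> = Ghat G f" by (rule Ghat_eq[symmetric]) fact
  finally show ?thesis .
qed

lemma grad_transfer:
  fixes \<psi> \<Phi> h z :: "real^'d \<Rightarrow> real^'d"
  assumes hg: "has_L2_gradient (Ghat G) \<psi> \<Phi>" and hh: "h \<in> meas_pres_bij" and hz: "z \<in> L2Z"
    and hp: "\<psi> \<in> L2M"
  shows "has_L2_gradient (Ghat G) (\<lambda>x. \<psi> (h x) + z x) (\<lambda>x. \<Phi> (h x))"
proof -
  define g where "g = inv_into unit_cube h"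
  note F = mpb_facts[OF hh, folded g_def]
  have PL: "\<Phi> \<in> L2M" using hg by (simp add: has_L2_gradient_def)
  have pm: "\<psi> \<in> borel_measurable Leb_cube" using hp by (simp add: L2M_def)
  have Pm: "\<Phi> \<in> borel_measurable Leb_cube" using PL by (simp add: L2M_def)
  have "(\<lambda>x. \<Phi> (h x)) \<in> L2M" by (rule L2M_comp(1)[OF F(1,3) PL])
  moreover have "\<exists>\<delta>>0. \<forall>\<phi>\<in>L2M. L2_norm \<phi> < \<delta> \<longrightarrow>
        \<bar>Ghat G (\<lambda>x. \<psi> (h x) + z x + \<phi> x) - Ghat G (\<lambda>x. \<psi> (h x) + z x)
          - L2_inner (\<lambda>x. \<Phi> (h x)) \<phi>\<bar> \<le> \<epsilon> * L2_norm \<phi>" if e: "\<epsilon> > 0" for \<epsilon>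
  proof -
    obtain \<delta> where d: "\<delta> > 0" and dd: "\<And>\<phi>. \<phi>\<in>L2M \<Longrightarrow> L2_norm \<phi> < \<delta> \<Longrightarrow>
        \<bar>Ghat G (\<lambda>x. \<psi> x + \<phi> x) - Ghat G \<psi> - L2_inner \<Phi> \<phi>\<bar> \<le> \<epsilon> * L2_norm \<phi>"
      using hg e unfolding has_L2_gradient_def by metis
    show ?thesis
    proof (intro exI conjI ballI impI)
      show "\<delta> > 0" by fact
      fix \<phi> :: "real^'d \<Rightarrow> real^'d" assume phL: "\<phi> \<in> L2M" and pn: "L2_norm \<phi> < \<delta>"
      define \<phi>' where "\<phi>' = (\<lambda>x. \<phi> (g x))"
      have ph'L: "\<phi>' \<in> L2M" and nn: "L2_norm \<phi>' = L2_norm \<phi>"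
        unfolding \<phi>'_def using L2M_comp[OF F(2,4) phL] by auto
      have phm: "\<phi> \<in> borel_measurable Leb_cube" using phL by (simp add: L2M_def)
      have ph'm: "\<phi>' \<in> borel_measurable Leb_cube" using ph'L by (simp add: L2M_def)
      have e1: "Ghat G (\<lambda>x. \<psi> (h x) + z x + \<phi> x) = Ghat G (\<lambda>x. \<psi> x + \<phi>' x)"
      proof -
        have "Ghat G (\<lambda>x. \<psi> (h x) + z x + \<phi> x) = Ghat G (\<lambda>x. (\<lambda>y. \<psi> y + \<phi>' y) (h x) + z x)"
          by (rule Ghat_cong) (simp add: \<phi>'_def F(5))
        also have "\<dots> = Ghat G (\<lambda>x. \<psi> x + \<phi>' x)"
          by (rule Ghat_inv[OF hh hz]) (use pm ph'm in measurable)
        finally show ?thesis .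
      qed
      have e2: "Ghat G (\<lambda>x. \<psi> (h x) + z x) = Ghat G \<psi>" by (rule Ghat_inv[OF hh hz pm])
      have e3: "L2_inner (\<lambda>x. \<Phi> (h x)) \<phi> = L2_inner \<Phi> \<phi>'"
      proof -
        have im: "(\<lambda>x. \<Phi> x \<bullet> \<phi>' x) \<in> borel_measurable Leb_cube" using Pm ph'm by measurable
        have "L2_inner \<Phi> \<phi>' = (\<integral>x. \<Phi> (h x) \<bullet> \<phi>' (h x) \<partial>Leb_cube)"
          unfolding L2_inner_def using mp_integral(1)[OF F(1,3) im] by simp
        also have "\<dots> = (\<integral>x. \<Phi> (h x) \<bullet> \<phi> x \<partial>Leb_cube)"
          by (rule Bochner_Integration.integral_cong) (auto simp: space_Leb \<phi>'_def F(5))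
        finally show ?thesis by (simp add: L2_inner_def)
      qed
      show "\<bar>Ghat G (\<lambda>x. \<psi> (h x) + z x + \<phi> x) - Ghat G (\<lambda>x. \<psi> (h x) + z x)
          - L2_inner (\<lambda>x. \<Phi> (h x)) \<phi>\<bar> \<le> \<epsilon> * L2_norm \<phi>"
        using dd[OF ph'L] pn nn e1 e2 e3 by simp
    qed
  qed
  ultimately show ?thesis unfolding has_L2_gradient_def by blast
qed

lemma grad_exists:
  fixes G :: "(real ^ 'd) measure \<Rightarrow> real"
    and mut mu :: "(real ^ 'd) measure"
    and \<psi> :: "real ^ 'd \<Rightarrow> real ^ 'd"
  assumes "strongly_diff G mut"
    and "mu \<in> prob2"
    and mut_eq: "distr mu borel tor_proj = mut"
    and "\<psi> \<in> L2M"
    and mu_eq: "distr Leb_cube borel \<psi> = mu"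
  shows "\<exists>\<Phi>. has_L2_gradient (Ghat G) \<psi> \<Phi>"
proof -
  obtain \<xi> k where xm: "\<xi> \<in> borel_measurable mut" and xi: "integrable mut (\<lambda>x. (norm (\<xi> x))\<^sup>2)"
    and k: "k > 0" and SD: "\<And>nu \<gamma>. nu \<in> prob_torus \<Longrightarrow> \<gamma> \<in> plans mut nu \<Longrightarrow>
          \<bar>G nu - G mut - (\<integral>(x, v). \<xi> x \<bullet> v \<partial>\<gamma>)\<bar> \<le> k * (\<integral>(x, v). (norm v)\<^sup>2 \<partial>\<gamma>)"
    using assms(1) unfolding strongly_diff_def by blast
  have pm: "\<psi> \<in> borel_measurable Leb_cube" using assms(4) by (simp add: L2M_def)
  have pmu: "prob_space mu" using assms(2) by (simp add: prob2_def)
  have "emeasure mu (space mu) = 1" using pmu by (simp add: prob_space.emeasure_space_1)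
  then have "emeasure (Leb_cube :: (real^'d) measure) (space Leb_cube) = 1"
    using pm unfolding mu_eq[symmetric] by (simp add: emeasure_distr)
  then have PL: "prob_space (Leb_cube :: (real^'d) measure)" by (rule prob_spaceI)
  have mut_eq2: "mut = distr Leb_cube borel (\<lambda>x. tor_proj (\<psi> x))"
    unfolding mut_eq[symmetric] mu_eq[symmetric] using pm
    by (subst distr_distr) (auto simp: comp_def)
  have sm: "sets mut = sets borel" unfolding mut_eq2 by simp
  have xm': "\<xi> \<in> borel_measurable borel" using xm by (simp add: measurable_cong_sets[OF sm refl])
  define \<Phi> where "\<Phi> = (\<lambda>x. \<xi> (tor_proj (\<psi> x)))"
  have Pm: "\<Phi> \<in> borel_measurable Leb_cube" unfolding \<Phi>_def using xm' pm by measurable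
  have "integrable Leb_cube (\<lambda>x. (norm (\<Phi> x))\<^sup>2)"
  proof -
    have "integrable (distr Leb_cube borel (\<lambda>x. tor_proj (\<psi> x))) (\<lambda>x. (norm (\<xi> x))\<^sup>2)"
      using xi mut_eq2 by simp
    moreover have m1: "(\<lambda>x. tor_proj (\<psi> x)) \<in> borel_measurable Leb_cube" using pm by measurable
    moreover have m2: "(\<lambda>x. (norm (\<xi> x))\<^sup>2) \<in> borel_measurable borel" using xm' by measurable
    ultimately show ?thesis unfolding \<Phi>_def
      using integrable_distr_eq[OF m1 m2] by simp
  qed
  with Pm have PhL: "\<Phi> \<in> L2M" by (simp add: L2M_def)
  have "has_L2_gradient (Ghat G) \<psi> \<Phi>"
    unfolding has_L2_gradient_def
  proof (intro conjI allI impI PhL)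
    fix \<epsilon> :: real assume e: "\<epsilon> > 0"
    show "\<exists>\<delta>>0. \<forall>\<phi>\<in>L2M. L2_norm \<phi> < \<delta> \<longrightarrow>
        \<bar>Ghat G (\<lambda>x. \<psi> x + \<phi> x) - Ghat G \<psi> - L2_inner \<Phi> \<phi>\<bar> \<le> \<epsilon> * L2_norm \<phi>"
    proof (intro exI conjI ballI impI)
      show "\<epsilon> / k > 0" using e k by simp
      fix \<phi> :: "real^'d \<Rightarrow> real^'d" assume phL: "\<phi> \<in> L2M" and pn: "L2_norm \<phi> < \<epsilon> / k"
      have phm: "\<phi> \<in> borel_measurable Leb_cube" and phi: "integrable Leb_cube (\<lambda>x. (norm (\<phi> x))\<^sup>2)"
        using phL by (auto simp: L2M_def)
      define nu where "nu = distr Leb_cube borel (\<lambda>x. tor_proj (\<psi> x + \<phi> x))"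
      define T where "T = (\<lambda>x. (tor_proj (\<psi> x), \<phi> x))"
      define \<gamma> where "\<gamma> = distr Leb_cube (borel \<Otimes>\<^sub>M borel) T"
      have Tm: "T \<in> measurable Leb_cube (borel \<Otimes>\<^sub>M borel)" unfolding T_def using pm phm by measurable
      have G1: "Ghat G (\<lambda>x. \<psi> x + \<phi> x) = G nu" unfolding nu_def
        by (rule Ghat_eq) (use pm phm in measurable)
      have G2: "Ghat G \<psi> = G mut" unfolding Ghat_def mu_eq mut_eq ..
      have nuT: "nu \<in> prob_torus"
        unfolding prob_torus_def
      proof (intro CollectI conjI)
        show "prob_space nu" unfolding nu_def
          by (rule prob_space.prob_space_distr[OF PL]) (use pm phm in measurable)
        show "sets nu = sets borel" unfolding nu_def by simp
        show "emeasure nu (UNIV - unit_cube) = 0"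
        proof (cases "UNIV - unit_cube \<in> sets nu")
          case True
          then have "emeasure nu (UNIV - unit_cube) =
              emeasure Leb_cube ((\<lambda>x. tor_proj (\<psi> x + \<phi> x)) -` (UNIV - unit_cube) \<inter> space Leb_cube)"
          proof -
            have m: "(\<lambda>x. tor_proj (\<psi> x + \<phi> x)) \<in> measurable Leb_cube borel" using pm phm by measurable
            show ?thesis unfolding nu_def by (rule emeasure_distr[OF m]) (use True in \<open>simp add: nu_def\<close>)
          qed
          also have "(\<lambda>x. tor_proj (\<psi> x + \<phi> x)) -` (UNIV - unit_cube) \<inter> space Leb_cube = {}"
            using tor_proj_in by blast
          also have "emeasure Leb_cube {} = 0" by simp
          finally show ?thesis .
        next
          case False
          then show ?thesis by (simp add: emeasure_notin_sets)
        qed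
      qed
      have gP: "\<gamma> \<in> plans mut nu"
        unfolding plans_def
      proof (intro CollectI conjI)
        show "prob_space \<gamma>" unfolding \<gamma>_def by (rule prob_space.prob_space_distr[OF PL Tm])
        show "sets \<gamma> = sets (borel \<Otimes>\<^sub>M borel)" unfolding \<gamma>_def by simp
        show "integrable \<gamma> (\<lambda>(x, v). (norm v)\<^sup>2)" unfolding \<gamma>_def
          by (subst integrable_distr_eq[OF Tm]) (measurable, simp add: T_def phi)
        show "distr \<gamma> borel fst = mut" unfolding \<gamma>_def mut_eq2
          by (subst distr_distr) (use Tm in \<open>auto simp: comp_def T_def\<close>)
        have "distr \<gamma> borel (\<lambda>(x, v). tor_proj (x + v)) =
            distr Leb_cube borel (\<lambda>x. tor_proj (tor_proj (\<psi> x) + \<phi> x))"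
          unfolding \<gamma>_def by (subst distr_distr) (use Tm in \<open>auto simp: comp_def T_def\<close>)
        also have "\<dots> = nu" unfolding nu_def by (simp add: tor_proj_tor)
        finally show "distr \<gamma> borel (\<lambda>(x, v). tor_proj (x + v)) = nu" .
      qed
      have I1: "(\<integral>(x, v). \<xi> x \<bullet> v \<partial>\<gamma>) = L2_inner \<Phi> \<phi>"
      proof -
        have m: "(\<lambda>(x, v). \<xi> x \<bullet> v) \<in> borel_measurable (borel \<Otimes>\<^sub>M borel)" using xm' by measurable
        show ?thesis unfolding \<gamma>_def L2_inner_def
          by (subst integral_distr[OF Tm m]) (simp add: T_def \<Phi>_def)
      qed
      have I2: "(\<integral>(x, v). (norm v)\<^sup>2 \<partial>\<gamma>) = (L2_norm \<phi>)\<^sup>2"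
      proof -
        have "(\<integral>(x, v). (norm v)\<^sup>2 \<partial>\<gamma>) = (\<integral>x. (norm (\<phi> x))\<^sup>2 \<partial>Leb_cube)"
          unfolding \<gamma>_def by (subst integral_distr[OF Tm]) (measurable, simp add: T_def)
        moreover have "(\<integral>x. (norm (\<phi> x))\<^sup>2 \<partial>Leb_cube) \<ge> 0" by simp
        ultimately show ?thesis unfolding L2_norm_def by simp
      qed
      have main: "\<bar>G nu - G mut - L2_inner \<Phi> \<phi>\<bar> \<le> k * (L2_norm \<phi>)\<^sup>2"
        using SD[OF nuT gP] I1 I2 by simp
      have n0: "L2_norm \<phi> \<ge> 0" by (simp add: L2_norm_def)
      have "k * L2_norm \<phi> \<le> \<epsilon>" using pn k by (simp add: field_simps)
      then have "k * (L2_norm \<phi>)\<^sup>2 \<le> \<epsilon> * L2_norm \<phi>"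
        using n0 by (simp add: power2_eq_square mult_right_mono mult.assoc[symmetric])
      then show "\<bar>Ghat G (\<lambda>x. \<psi> x + \<phi> x) - Ghat G \<psi> - L2_inner \<Phi> \<phi>\<bar> \<le> \<epsilon> * L2_norm \<phi>"
        using main G1 G2 by linarith
    qed
  qed
  then show ?thesis by blast
qed



theorem lemma1p4:
  fixes G :: "(real ^ 'd) measure \<Rightarrow> real"
    and mut mu :: "(real ^ 'd) measure"
    and \<psi> :: "real ^ 'd \<Rightarrow> real ^ 'd"
  assumes "mut \<in> prob_torus"
    and "strongly_diff G mut"
    and "mu \<in> prob2"
    and "distr mu borel tor_proj = mut"
    and "\<psi> \<in> L2M"
    and "distr Leb_cube borel \<psi> = mu"
  shows "(\<exists>\<Phi>. has_L2_gradient (Ghat G) \<psi> \<Phi>) \<and>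
    (\<forall>h\<in>meas_pres_bij. \<forall>z\<in>L2Z. \<forall>\<Phi>. has_L2_gradient (Ghat G) \<psi> \<Phi> \<longrightarrow>
        has_L2_gradient (Ghat G) (\<lambda>x. \<psi> (h x) + z x) (\<lambda>x. \<Phi> (h x)))"
  using grad_exists[OF assms(2-6)] grad_transfer assms(5) by blast

end
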